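(* Let $G=(V,E)$ be an almost tree (2). If $X,Y\subseteq V$ are such that $\mathbf v(X)$ and $\mathbf v(Y)$ are distinct and adjacent vertices of $\mathrm{CUT}(G)$, then $|\delta(X\triangle Y)|\le 3$.
   Context: For an undirected graph $G=(V,E)$ and $S\subseteq V$, $\delta(S)\subseteq E$ denotes the set of edges with exactly one endpoint in $S$, and $\mathbf v(S)\in\{0,1\}^{E}$ is its incidence vector ($v(S)_e=1$ iff $e\in\delta(S)$). The cut polytope is $\mathrm{CUT}(G)=\operatorname{conv}\{\mathbf v(S):S\subseteq V\}\subset\mathbb R^{E}$; adjacency of vertices means they are joined by a one-dimensional face. $X\triangle Y$ denotes symmetric difference. A connected graph is an almost tree ($k$) if every biconnected component (maximal subgraph that remains connected after removal of any single vertex) has at most $k$ edges not belonging to a spanning tree of that component. *)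

theory Defs
  imports "HOL-Analysis.Analysis"
begin

text \<open>A finite graph with vertex type 'v and edge type 'e (both finite);
  ends e is the two-element set of endpoints of edge e.  The whole graph has
  vertex set UNIV and edge set UNIV.\<close>

definition simple_graph :: "('e \<Rightarrow> 'v set) \<Rightarrow> bool" where
  "simple_graph ends \<longleftrightarrow> (\<forall>e. card (ends e) = 2) \<and> inj ends"

definition adj :: "('e \<Rightarrow> 'v set) \<Rightarrow> 'e set \<Rightarrow> 'v \<Rightarrow> 'v \<Rightarrow> bool" where
  "adj ends F u v \<longleftrightarrow> (\<exists>e\<in>F. ends e = {u, v})"

definition is_subgraph :: "('e \<Rightarrow> 'v set) \<Rightarrow> 'v set \<Rightarrow> 'e set \<Rightarrow> bool" where
  "is_subgraph ends W F \<longleftrightarrow> (\<forall>e\<in>F. ends e \<subseteq> W)"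

definition connected_sg :: "('e \<Rightarrow> 'v set) \<Rightarrow> 'v set \<Rightarrow> 'e set \<Rightarrow> bool" where
  "connected_sg ends W F \<longleftrightarrow> (\<forall>u\<in>W. \<forall>v\<in>W. (adj ends F)\<^sup>*\<^sup>* u v)"

definition biconn :: "('e \<Rightarrow> 'v set) \<Rightarrow> 'v set \<Rightarrow> 'e set \<Rightarrow> bool" where
  "biconn ends W F \<longleftrightarrow> connected_sg ends W F \<and>
     (\<forall>w\<in>W. connected_sg ends (W - {w}) {e\<in>F. w \<notin> ends e})"

definition biconnected_component :: "('e \<Rightarrow> 'v set) \<Rightarrow> 'v set \<Rightarrow> 'e set \<Rightarrow> bool" where
  "biconnected_component ends W F \<longleftrightarrow> is_subgraph ends W F \<and> biconn ends W F \<and>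
     (\<forall>W' F'. is_subgraph ends W' F' \<and> biconn ends W' F' \<and> W \<subseteq> W' \<and> F \<subseteq> F'
        \<longrightarrow> W' = W \<and> F' = F)"

definition spanning_tree :: "('e \<Rightarrow> 'v set) \<Rightarrow> 'v set \<Rightarrow> 'e set \<Rightarrow> 'e set \<Rightarrow> bool" where
  "spanning_tree ends W F T \<longleftrightarrow> T \<subseteq> F \<and> connected_sg ends W T \<and>
     (\<forall>t\<in>T. \<not> connected_sg ends W (T - {t}))"

definition almost_tree :: "nat \<Rightarrow> ('e \<Rightarrow> 'v set) \<Rightarrow> bool" where
  "almost_tree k ends \<longleftrightarrow> connected_sg ends UNIV UNIV \<and>
     (\<forall>W F. biconnected_component ends W F \<longrightarrow>
        (\<exists>T. spanning_tree ends W F T \<and> card (F - T) \<le> k))"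

definition delta :: "('e \<Rightarrow> 'v set) \<Rightarrow> 'v set \<Rightarrow> 'e set" where
  "delta ends S = {e. card (ends e \<inter> S) = 1}"

definition cutvec :: "('e::finite \<Rightarrow> 'v set) \<Rightarrow> 'v set \<Rightarrow> real ^ 'e" where
  "cutvec ends S = (\<chi> e. if e \<in> delta ends S then 1 else 0)"

definition CUT :: "('e::finite \<Rightarrow> 'v set) \<Rightarrow> (real ^ 'e) set" where
  "CUT ends = convex hull (range (cutvec ends))"

definition adjacent_in :: "(real ^ 'e::finite) set \<Rightarrow> real ^ 'e \<Rightarrow> real ^ 'e \<Rightarrow> bool" where
  "adjacent_in P x y \<longleftrightarrow> (\<exists>F. F face_of P \<and> aff_dim F = 1 \<and> x \<in> F \<and> y \<in> F)"

end

theory Submission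
  imports Defs
begin


lemma ends2:
  assumes "simple_graph ends"
  obtains u v where "ends e = {u,v}" "u \<noteq> v"
  using assms unfolding simple_graph_def by (metis card_2_iff)

lemma delta_iff:
  assumes "ends e = {u,v}" "u \<noteq> v"
  shows "e \<in> delta ends S \<longleftrightarrow> ((u \<in> S) \<noteq> (v \<in> S))"
  using assms by (cases "u \<in> S"; cases "v \<in> S") (auto simp: delta_def Int_insert_left)

lemma delta_symdiff:
  assumes "simple_graph ends"
  shows "delta ends ((A - B) \<union> (B - A)) = (delta ends A - delta ends B) \<union> (delta ends B - delta ends A)"
proof (rule set_eqI)
  fix e
  obtain u v where "ends e = {u,v}" "u \<noteq> v" using ends2[OF assms] by blast
  thus "e \<in> delta ends ((A - B) \<union> (B - A)) \<longleftrightarrow> e \<in> (delta ends A - delta ends B) \<union> (delta ends B - delta ends A)"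
    by (simp add: delta_iff) blast
qed

lemma delta_compl:
  assumes "simple_graph ends"
  shows "delta ends (- S) = delta ends S"
proof (rule set_eqI)
  fix e
  obtain u v where "ends e = {u,v}" "u \<noteq> v" using ends2[OF assms] by blast
  thus "e \<in> delta ends (- S) \<longleftrightarrow> e \<in> delta ends S" by (simp add: delta_iff)
qed

lemma cutvec_eq: "cutvec ends A = cutvec ends B \<longleftrightarrow> delta ends A = delta ends B"
  by (auto simp: cutvec_def vec_eq_iff)

lemma poly:
  fixes ends :: "'e::finite \<Rightarrow> 'v set"
  assumes sg: "simple_graph ends"
    and ne: "cutvec ends X \<noteq> cutvec ends Y"
    and adj: "adjacent_in (CUT ends) (cutvec ends X) (cutvec ends Y)"
    and A1: "delta ends A \<noteq> {}" and A2: "delta ends A \<subseteq> delta ends ((X - Y) \<union> (Y - X))"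
    and A3: "delta ends A \<noteq> delta ends ((X - Y) \<union> (Y - X))"
  shows False
proof -
  define S where "S = (X - Y) \<union> (Y - X)"
  define B where "B = (S - A) \<union> (A - S)"
  define XA where "XA = (X - A) \<union> (A - X)"
  define XB where "XB = (X - B) \<union> (B - X)"
  have dY: "delta ends Y = (delta ends X - delta ends S) \<union> (delta ends S - delta ends X)"
  proof -
    have "Y = (X - S) \<union> (S - X)" unfolding S_def by blast
    thus ?thesis using delta_symdiff[OF sg] by metis
  qed
  have dB: "delta ends B = delta ends S - delta ends A"
    using delta_symdiff[OF sg, of S A] A2 unfolding B_def S_def by blast
  have dXA: "delta ends XA = (delta ends X - delta ends A) \<union> (delta ends A - delta ends X)"
    unfolding XA_def by (rule delta_symdiff[OF sg])
  have dXB: "delta ends XB = (delta ends X - delta ends B) \<union> (delta ends B - delta ends X)"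
    unfolding XB_def by (rule delta_symdiff[OF sg])
  define p where "p = cutvec ends X"
  define q where "q = cutvec ends Y"
  define r where "r = cutvec ends XA"
  define s where "s = cutvec ends XB"
  have mid: "midpoint r s = midpoint p q"
    unfolding midpoint_def p_def q_def r_def s_def
    using A2 by (auto simp: vec_eq_iff cutvec_def dY dB dXA dXB S_def)
  have rs: "r \<noteq> s"
  proof
    assume "r = s"
    hence "delta ends XA = delta ends XB" unfolding r_def s_def cutvec_eq .
    hence "delta ends A = delta ends B" unfolding dXA dXB by blast
    thus False using dB A1 by blast
  qed
  obtain F where F: "F face_of CUT ends" "aff_dim F = 1" "p \<in> F" "q \<in> F"
    using adj unfolding adjacent_in_def p_def q_def by blast
  have "midpoint p q \<in> F"
    using face_of_imp_convex[OF F(1)] F(3,4) midpoint_in_closed_segment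
    by (metis convex_contains_segment subsetD)
  hence "midpoint r s \<in> open_segment r s" "midpoint r s \<in> F" using mid rs
    by (metis midpoint_in_open_segment)+
  moreover have "r \<in> CUT ends" "s \<in> CUT ends"
    unfolding CUT_def r_def s_def by (auto intro: hull_inc)
  ultimately have rF: "r \<in> F" using F(1) unfolding face_of_def by blast
  have "collinear F" using F(2) by (simp add: collinear_aff_dim)
  hence "collinear {p,q,r}" using F rF by (auto intro: collinear_subset)
  hence "r \<in> affine hull {p,q}" using ne unfolding p_def[symmetric] q_def[symmetric]
    by (simp add: collinear_3_affine_hull)
  then obtain u where u: "r = p + u *\<^sub>R (q - p)" by (auto simp: affine_hull_2_alt)
  obtain e where e: "p $ e \<noteq> q $ e" using ne unfolding p_def q_def by (auto simp: vec_eq_iff)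
  have "r $ e = p $ e + u * (q $ e - p $ e)" using u by simp
  have "u = 0 \<or> u = 1"
    using e \<open>r $ e = p $ e + u * (q $ e - p $ e)\<close>
    unfolding p_def q_def r_def cutvec_def by (auto split: if_splits)
  hence "r = p \<or> r = q" using u by auto
  thus False
  proof
    assume "r = p"
    hence "delta ends XA = delta ends X" unfolding r_def p_def cutvec_eq .
    thus False using A1 unfolding dXA by blast
  next
    assume "r = q"
    hence "delta ends XA = delta ends Y" unfolding r_def q_def cutvec_eq .
    thus False using A2 A3 unfolding dXA dY S_def by blast
  qed
qed



lemma adj_sym: "adj ends F u v \<Longrightarrow> adj ends F v u"
  unfolding adj_def by (metis insert_commute)

lemma reach_sym: "(adj ends F)\<^sup>*\<^sup>* u v \<Longrightarrow> (adj ends F)\<^sup>*\<^sup>* v u"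
proof (induction rule: rtranclp_induct)
  case base then show ?case by simp
next
  case (step y z)
  then show ?case using adj_sym by (metis converse_rtranclp_into_rtranclp)
qed

lemma adj_mono: "F \<subseteq> F' \<Longrightarrow> adj ends F u v \<Longrightarrow> adj ends F' u v"
  unfolding adj_def by blast

lemma reach_mono: "F \<subseteq> F' \<Longrightarrow> (adj ends F)\<^sup>*\<^sup>* u v \<Longrightarrow> (adj ends F')\<^sup>*\<^sup>* u v"
  by (metis adj_mono mono_rtranclp)

lemma bfs:
  fixes ends :: "'e::finite \<Rightarrow> 'v::finite set"
  assumes sub: "is_subgraph ends W F" and W0: "W0 \<subseteq> W"
    and reach: "\<forall>w\<in>W. \<exists>x\<in>W0. (adj ends F)\<^sup>*\<^sup>* x w"
  shows "\<exists>P\<subseteq>F. card P = card (W - W0) \<and> (\<forall>e\<in>P. \<not> ends e \<subseteq> W0)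
            \<and> (\<forall>w\<in>W. \<exists>x\<in>W0. (adj ends P)\<^sup>*\<^sup>* x w)"
proof -
  define d where "d w = (LEAST n. \<exists>x\<in>W0. (adj ends F ^^ n) x w)" for w
  have dex: "\<exists>x\<in>W0. (adj ends F ^^ d w) x w" if wW: "w \<in> W" for w
  proof -
    obtain x n where "x \<in> W0" "(adj ends F ^^ n) x w"
      using reach wW by (metis rtranclp_power)
    hence "\<exists>n x. x\<in>W0 \<and> (adj ends F ^^ n) x w" by blast
    thus ?thesis unfolding d_def by (smt (verit) LeastI_ex)
  qed
  have step: "\<exists>e\<in>F. \<exists>y. ends e = {y,w} \<and> d y < d w" if wW: "w \<in> W - W0" for w
  proof -
    obtain x where x: "x \<in> W0" "(adj ends F ^^ d w) x w" using dex wW by blast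
    have "d w \<noteq> 0"
    proof
      assume "d w = 0"
      hence "x = w" using x by simp
      thus False using x wW by blast
    qed
    then obtain n where n: "d w = Suc n" using not0_implies_Suc by blast
    then obtain y where y: "(adj ends F ^^ n) x y" "adj ends F y w"
      using x(2) by (metis relpowp_Suc_E)
    have "d y \<le> n" unfolding d_def using x(1) y(1) by (metis (mono_tags, lifting) Least_le)
    thus ?thesis using y(2) n unfolding adj_def by (metis le_imp_less_Suc)
  qed
  define pe where "pe w = (SOME e. e \<in> F \<and> (\<exists>y. ends e = {y,w} \<and> d y < d w))" for w
  have pe: "pe w \<in> F \<and> (\<exists>y. ends (pe w) = {y,w} \<and> d y < d w)" if "w \<in> W - W0" for w
    unfolding pe_def using someI_ex[OF step[OF that, unfolded Bex_def]] by blast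
  have inj: "inj_on pe (W - W0)"
  proof (rule inj_onI)
    fix w1 w2 assume a: "w1 \<in> W - W0" "w2 \<in> W - W0" "pe w1 = pe w2"
    obtain y1 where y1: "ends (pe w1) = {y1,w1}" "d y1 < d w1" using pe[OF a(1)] by blast
    obtain y2 where y2: "ends (pe w2) = {y2,w2}" "d y2 < d w2" using pe[OF a(2)] by blast
    show "w1 = w2"
    proof (rule ccontr)
      assume "w1 \<noteq> w2"
      hence "w1 = y2 \<and> w2 = y1" using y1(1) y2(1) a(3) by (metis doubleton_eq_iff)
      thus False using y1(2) y2(2) by simp
    qed
  qed
  define P where "P = pe ` (W - W0)"
  have PF: "P \<subseteq> F" unfolding P_def using pe by blast
  have cardP: "card P = card (W - W0)" unfolding P_def using inj by (simp add: card_image)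
  have notW0: "\<forall>e\<in>P. \<not> ends e \<subseteq> W0" unfolding P_def using pe by fastforce
  have conn: "\<forall>w\<in>W. d w = n \<longrightarrow> (\<exists>x\<in>W0. (adj ends P)\<^sup>*\<^sup>* x w)" for n
  proof (induction n rule: less_induct)
    case (less n)
    show ?case
    proof (intro ballI impI)
      fix w assume w: "w \<in> W" "d w = n"
      show "\<exists>x\<in>W0. (adj ends P)\<^sup>*\<^sup>* x w"
      proof (cases "w \<in> W0")
        case True then show ?thesis by blast
      next
        case False
        hence wW: "w \<in> W - W0" using w by blast
        obtain y where y: "ends (pe w) = {y,w}" "d y < d w" using pe[OF wW] by blast
        have "y \<in> W" using sub pe[OF wW] y(1) unfolding is_subgraph_def by blast
        then obtain x where x: "x \<in> W0" "(adj ends P)\<^sup>*\<^sup>* x y" using less y(2) w(2) by blast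
        have "adj ends P y w" unfolding adj_def P_def using wW y(1) by blast
        thus ?thesis using x by (meson rtranclp.rtrancl_into_rtrancl)
      qed
    qed
  qed
  show ?thesis using PF cardP notW0 conn by blast
qed

lemma conn_card:
  fixes ends :: "'e::finite \<Rightarrow> 'v::finite set"
  assumes "is_subgraph ends W F" "connected_sg ends W F" "W \<noteq> {}"
  shows "card W \<le> card F + 1"
proof -
  obtain r where r: "r \<in> W" using assms(3) by blast
  obtain P where P: "P \<subseteq> F" "card P = card (W - {r})"
    using bfs[OF assms(1), of "{r}"] r assms(2) unfolding connected_sg_def by blast
  have "card P \<le> card F" using P(1) by (simp add: card_mono)
  thus ?thesis using P(2) r by simp
qed

lemma tree_card:
  fixes ends :: "'e::finite \<Rightarrow> 'v::finite set"
  assumes "is_subgraph ends W F" "spanning_tree ends W F T" "W \<noteq> {}"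
  shows "card T + 1 \<le> card W"
proof -
  obtain r where r: "r \<in> W" using assms(3) by blast
  have TF: "T \<subseteq> F" and Tc: "connected_sg ends W T"
    and Tm: "\<forall>t\<in>T. \<not> connected_sg ends W (T - {t})"
    using assms(2) unfolding spanning_tree_def by auto
  have subT: "is_subgraph ends W T" using assms(1) TF unfolding is_subgraph_def by blast
  obtain P where P: "P \<subseteq> T" "card P = card (W - {r})" "\<forall>w\<in>W. (adj ends P)\<^sup>*\<^sup>* r w"
    using bfs[OF subT, of "{r}"] r Tc unfolding connected_sg_def by blast
  have Pc: "connected_sg ends W P"
    unfolding connected_sg_def using P(3) by (meson reach_sym rtranclp_trans)
  have "T \<subseteq> P"
  proof
    fix t assume t: "t \<in> T"
    show "t \<in> P"
    proof (rule ccontr)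
      assume "t \<notin> P"
      hence "P \<subseteq> T - {t}" using P(1) by blast
      hence "connected_sg ends W (T - {t})" using Pc unfolding connected_sg_def
        by (meson reach_mono)
      thus False using Tm t by blast
    qed
  qed
  hence "card T \<le> card P" by (simp add: card_mono)
  moreover have "card (W - {r}) + 1 = card W" using r
    by (metis One_nat_def Suc_pred card_Diff_singleton card_gt_0_iff empty_iff finite Suc_eq_plus1)
  ultimately show ?thesis using P(2) by linarith
qed

lemma cyc_mono:
  fixes ends :: "'e::finite \<Rightarrow> 'v::finite set"
  assumes "is_subgraph ends W F" "connected_sg ends W F" "is_subgraph ends W0 F0"
    "W0 \<subseteq> W" "F0 \<subseteq> F" "W0 \<noteq> {}"
  shows "card F0 + card W \<le> card F + card W0"
proof -
  obtain r where r: "r \<in> W0" using assms(6) by blast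
  have "\<forall>w\<in>W. \<exists>x\<in>W0. (adj ends F)\<^sup>*\<^sup>* x w" using assms(2,4) r unfolding connected_sg_def by blast
  then obtain P where P: "P \<subseteq> F" "card P = card (W - W0)" "\<forall>e\<in>P. \<not> ends e \<subseteq> W0"
    using bfs[OF assms(1,4)] by blast
  have disj: "P \<inter> F0 = {}" using P(3) assms(3) unfolding is_subgraph_def by blast
  have "card (F0 \<union> P) \<le> card F" using P(1) assms(5) by (simp add: card_mono)
  moreover have "card (F0 \<union> P) = card F0 + card P" using disj by (simp add: card_Un_disjoint Int_commute)
  moreover have "card W = card W0 + card (W - W0)" using assms(4)
    by (metis card_Diff_subset card_mono finite le_add_diff_inverse)
  ultimately show ?thesis using P(2) by linarith
qed



lemma cross:
  assumes sg: "simple_graph ends" and "e \<notin> delta ends S" "ends e = {y,z}"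
  shows "y \<in> S \<longleftrightarrow> z \<in> S"
proof -
  obtain u v where uv: "ends e = {u,v}" "u \<noteq> v" using ends2[OF sg] by blast
  have "y \<noteq> z"
  proof
    assume "y = z"
    hence "card (ends e) = 1" using assms(3) by simp
    thus False using sg unfolding simple_graph_def by simp
  qed
  thus ?thesis using assms(2) delta_iff[where ends=ends and e=e and u=y and v=z, OF assms(3)] by blast
qed

lemma stay:
  assumes sg: "simple_graph ends" and "(adj ends (- delta ends S))\<^sup>*\<^sup>* u v"
  shows "u \<in> S \<longleftrightarrow> v \<in> S"
  using assms(2)
proof (induction rule: rtranclp_induct)
  case base then show ?case by simp
next
  case (step y z)
  then obtain e where "e \<notin> delta ends S" "ends e = {y,z}" unfolding adj_def by auto
  then show ?case using step.IH cross[OF sg] by blast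
qed

lemma delta_empty:
  assumes sg: "simple_graph ends" and conn: "connected_sg ends UNIV UNIV"
    and "delta ends A = {}" "x \<in> A"
  shows "A = UNIV"
proof -
  have "y \<in> A" for y
  proof -
    have "(adj ends UNIV)\<^sup>*\<^sup>* x y" using conn unfolding connected_sg_def by blast
    thus ?thesis
    proof (induction rule: rtranclp_induct)
      case base then show ?case using assms(4) .
    next
      case (step y z)
      then obtain e where "ends e = {y,z}" unfolding adj_def by auto
      then show ?case using step.IH cross[OF sg, of e A] assms(3) by blast
    qed
  qed
  thus ?thesis by blast
qed

lemma delta_UNIV: "simple_graph ends \<Longrightarrow> delta ends UNIV = {}"
  by (auto simp: delta_def simple_graph_def)

lemma side_conn:
  fixes ends :: "'e::finite \<Rightarrow> 'v::finite set"
  assumes sg: "simple_graph ends" and conn: "connected_sg ends UNIV UNIV"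
    and dS: "delta ends S \<noteq> {}"
    and ND: "\<forall>A. delta ends A \<subseteq> delta ends S \<longrightarrow> delta ends A = {} \<or> delta ends A = delta ends S"
  shows "connected_sg ends S (- delta ends S)"
proof -
  obtain e0 where e0: "e0 \<in> delta ends S" using dS by blast
  obtain a b where ab: "ends e0 = {a,b}" "a \<noteq> b" using ends2[OF sg] by blast
  have "(a \<in> S) \<noteq> (b \<in> S)" using e0 delta_iff[where ends=ends and e=e0 and u=a and v=b, OF ab] by blast
  then obtain a b where ab: "ends e0 = {a,b}" "a \<in> S" "b \<notin> S" using ab by (metis insert_commute)
  have SU: "S \<noteq> UNIV" using ab by blast
  have key: "(adj ends (- delta ends S))\<^sup>*\<^sup>* u a" if u: "u \<in> S" for u
  proof -
    define Au where "Au = {v. (adj ends (- delta ends S))\<^sup>*\<^sup>* u v}"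
    have sub: "delta ends Au \<subseteq> delta ends S"
    proof
      fix e assume e: "e \<in> delta ends Au"
      obtain y z where yz: "ends e = {y,z}" "y \<noteq> z" using ends2[OF sg] by blast
      have d: "(y \<in> Au) \<noteq> (z \<in> Au)" using e delta_iff[where ends=ends and e=e and u=y and v=z, OF yz] by blast
      show "e \<in> delta ends S"
      proof (rule ccontr)
        assume "e \<notin> delta ends S"
        hence "adj ends (- delta ends S) y z" "adj ends (- delta ends S) z y"
          unfolding adj_def using yz by (auto simp: insert_commute)
        thus False using d unfolding Au_def mem_Collect_eq by (meson rtranclp.rtrancl_into_rtrancl)
      qed
    qed
    have AuS: "Au \<subseteq> S" unfolding Au_def using stay[OF sg] u by blast
    have "u \<in> Au" unfolding Au_def by simp
    hence "delta ends Au \<noteq> {}" using delta_empty[OF sg conn] AuS SU by blast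
    hence "delta ends Au = delta ends S" using ND sub by blast
    hence "e0 \<in> delta ends Au" using e0 by simp
    hence "(a \<in> Au) \<noteq> (b \<in> Au)" using delta_iff[where ends=ends and e=e0 and u=a and v=b, OF ab(1)] ab by blast
    moreover have "b \<notin> Au" using AuS ab by blast
    ultimately show ?thesis unfolding Au_def by simp
  qed
  show ?thesis unfolding connected_sg_def
    using key by (meson reach_sym rtranclp_trans)
qed



definition PP :: "('e \<Rightarrow> 'v set) \<Rightarrow> 'v set \<Rightarrow> 'v set \<Rightarrow> 'e set \<Rightarrow> bool" where
  "PP ends S W F \<longleftrightarrow> is_subgraph ends W F \<and> delta ends S \<subseteq> F \<and>
     connected_sg ends (W \<inter> S) (F - delta ends S) \<and> connected_sg ends (W - S) (F - delta ends S)"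

lemma PP_compl: "simple_graph ends \<Longrightarrow> PP ends (- S) W F = PP ends S W F"
  unfolding PP_def delta_compl by (auto simp: Diff_eq Int_commute)

lemma restrict:
  assumes sg: "simple_graph ends" and "(adj ends (F - delta ends S))\<^sup>*\<^sup>* x y" "x \<in> S"
  shows "y \<in> S \<and> (adj ends {e\<in>F - delta ends S. ends e \<subseteq> S})\<^sup>*\<^sup>* x y"
  using assms(2)
proof (induction rule: rtranclp_induct)
  case base then show ?case using assms(3) by simp
next
  case (step y z)
  then obtain e where e: "e \<in> F" "e \<notin> delta ends S" "ends e = {y,z}" unfolding adj_def by auto
  have "z \<in> S" using step.IH cross[OF sg e(2,3)] by blast
  hence "adj ends {e\<in>F - delta ends S. ends e \<subseteq> S} y z"
    unfolding adj_def using e step.IH by auto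
  thus ?case using step.IH \<open>z \<in> S\<close> by (meson rtranclp.rtrancl_into_rtrancl)
qed

lemma obtain_cross:
  assumes sg: "simple_graph ends" and "e0 \<in> delta ends S"
  obtains a b where "ends e0 = {a,b}" "a \<in> S" "b \<notin> S"
proof -
  obtain a b where ab: "ends e0 = {a,b}" "a \<noteq> b" using ends2[OF sg] by blast
  have "(a \<in> S) \<noteq> (b \<in> S)"
    using assms(2) delta_iff[where ends=ends and e=e0 and u=a and v=b, OF ab] by blast
  thus ?thesis using that ab by (metis insert_commute)
qed

lemma PP_conn:
  assumes sg: "simple_graph ends" and P: "PP ends S W F" and dS: "delta ends S \<noteq> {}"
  shows "connected_sg ends W F"
proof -
  obtain e0 where e0: "e0 \<in> delta ends S" using dS by blast
  obtain a b where ab: "ends e0 = {a,b}" "a \<in> S" "b \<notin> S" using obtain_cross[OF sg e0] by blast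
  have e0F: "e0 \<in> F" using P e0 unfolding PP_def by blast
  have abW: "a \<in> W" "b \<in> W" using P e0F ab unfolding PP_def is_subgraph_def by auto
  have ab_adj: "(adj ends F)\<^sup>*\<^sup>* a b" unfolding adj_def using e0F ab by auto
  have cS: "(adj ends F)\<^sup>*\<^sup>* x y" if "x \<in> W \<inter> S" "y \<in> W \<inter> S" for x y
    using P that unfolding PP_def connected_sg_def by (meson Diff_subset reach_mono)
  have cO: "(adj ends F)\<^sup>*\<^sup>* x y" if "x \<in> W - S" "y \<in> W - S" for x y
    using P that unfolding PP_def connected_sg_def by (meson Diff_subset reach_mono)
  have toa: "(adj ends F)\<^sup>*\<^sup>* x a" if "x \<in> W" for x
  proof (cases "x \<in> S")
    case True then show ?thesis using cS that abW ab by blast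
  next
    case False
    hence "(adj ends F)\<^sup>*\<^sup>* x b" using cO that abW ab by blast
    thus ?thesis using ab_adj reach_sym by (metis rtranclp_trans)
  qed
  show ?thesis unfolding connected_sg_def using toa by (meson reach_sym rtranclp_trans)
qed

lemma PP_count:
  fixes ends :: "'e::finite \<Rightarrow> 'v::finite set"
  assumes sg: "simple_graph ends" and P: "PP ends S W F" and dS: "delta ends S \<noteq> {}"
  shows "card W + card (delta ends S) \<le> card F + 2"
proof -
  obtain e0 where e0: "e0 \<in> delta ends S" using dS by blast
  obtain a b where ab: "ends e0 = {a,b}" "a \<in> S" "b \<notin> S" using obtain_cross[OF sg e0] by blast
  have e0F: "e0 \<in> F" using P e0 unfolding PP_def by blast
  have abW: "a \<in> W" "b \<in> W" using P e0F ab unfolding PP_def is_subgraph_def by auto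
  define FS where "FS = {e\<in>F - delta ends S. ends e \<subseteq> S}"
  define FO where "FO = {e\<in>F - delta ends (- S). ends e \<subseteq> - S}"
  have FO': "FO = {e\<in>F - delta ends S. ends e \<subseteq> - S}" unfolding FO_def delta_compl[OF sg] ..
  have sub: "is_subgraph ends W F" using P unfolding PP_def by blast
  have s1: "is_subgraph ends (W \<inter> S) FS" using sub unfolding FS_def is_subgraph_def by blast
  have s2: "is_subgraph ends (W - S) FO" using sub unfolding FO'  is_subgraph_def by blast
  have c1: "connected_sg ends (W \<inter> S) FS" unfolding connected_sg_def
  proof (intro ballI)
    fix x y assume xy: "x \<in> W \<inter> S" "y \<in> W \<inter> S"
    hence "(adj ends (F - delta ends S))\<^sup>*\<^sup>* x y" using P unfolding PP_def connected_sg_def by blast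
    from restrict[OF sg this] xy show "(adj ends FS)\<^sup>*\<^sup>* x y" unfolding FS_def by blast
  qed
  have c2: "connected_sg ends (W - S) FO" unfolding connected_sg_def
  proof (intro ballI)
    fix x y assume xy: "x \<in> W - S" "y \<in> W - S"
    hence "(adj ends (F - delta ends S))\<^sup>*\<^sup>* x y" using P unfolding PP_def connected_sg_def by blast
    hence "(adj ends (F - delta ends (- S)))\<^sup>*\<^sup>* x y" unfolding delta_compl[OF sg] .
    moreover have "x \<in> - S" using xy by blast
    ultimately show "(adj ends FO)\<^sup>*\<^sup>* x y" using restrict[OF sg] unfolding FO_def by blast
  qed
  have ne1: "W \<inter> S \<noteq> {}" using abW ab by blast
  have ne2: "W - S \<noteq> {}" using abW ab by blast
  have k1: "card (W \<inter> S) \<le> card FS + 1" by (rule conn_card[OF s1 c1 ne1])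
  have k2: "card (W - S) \<le> card FO + 1" by (rule conn_card[OF s2 c2 ne2])
  have ne: "ends e \<noteq> {}" for e
  proof
    assume "ends e = {}"
    hence "card (ends e) = 0" by simp
    thus False using sg unfolding simple_graph_def by simp
  qed
  have d1: "FS \<inter> FO = {}" unfolding FS_def FO' using ne by blast
  have d2: "(FS \<union> FO) \<inter> delta ends S = {}" unfolding FS_def FO' by blast
  have "FS \<union> FO \<union> delta ends S \<subseteq> F" using P unfolding PP_def FS_def FO' by blast
  hence "card (FS \<union> FO \<union> delta ends S) \<le> card F" by (simp add: card_mono)
  moreover have "card (FS \<union> FO \<union> delta ends S) = card FS + card FO + card (delta ends S)"
    using d1 d2 by (simp add: card_Un_disjoint)
  moreover have "card W = card (W \<inter> S) + card (W - S)"
    by (rule card_Int_Diff) simp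
  ultimately show ?thesis using k1 k2 by linarith
qed



lemma remove_side:
  fixes ends :: "'e::finite \<Rightarrow> 'v::finite set"
  assumes sg: "simple_graph ends" and P: "PP ends S W F" and dS: "delta ends S \<noteq> {}"
    and w: "w \<in> W" "w \<in> S"
    and nc: "\<not> connected_sg ends (W - {w}) {e\<in>F. w \<notin> ends e}"
  shows "\<exists>W' F'. PP ends S W' F' \<and> W' \<subset> W \<and> F' \<subseteq> F"
proof -
  define F1 where "F1 = {e\<in>F. w \<notin> ends e}"
  define Ou where "Ou = W - S"
  have sub: "is_subgraph ends W F" using P unfolding PP_def by blast
  have outer: "(adj ends {e\<in>F - delta ends S. ends e \<subseteq> - S})\<^sup>*\<^sup>* x y"
    if xy: "x \<in> W - S" "y \<in> W - S" for x y
  proof -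
    have "(adj ends (F - delta ends S))\<^sup>*\<^sup>* x y" using P xy unfolding PP_def connected_sg_def by blast
    hence "(adj ends (F - delta ends (- S)))\<^sup>*\<^sup>* x y" unfolding delta_compl[OF sg] .
    moreover have "x \<in> - S" using xy by blast
    ultimately have "(adj ends {e\<in>F - delta ends (- S). ends e \<subseteq> - S})\<^sup>*\<^sup>* x y"
      using restrict[OF sg] by blast
    thus ?thesis unfolding delta_compl[OF sg] .
  qed
  have Oc: "(adj ends F1)\<^sup>*\<^sup>* x y" if "x \<in> Ou" "y \<in> Ou" for x y
  proof -
    have "{e\<in>F - delta ends S. ends e \<subseteq> - S} \<subseteq> F1" unfolding F1_def using w by blast
    thus ?thesis using outer[of x y] that unfolding Ou_def by (meson reach_mono)
  qed
  obtain u where u: "u \<in> W - {w}" "\<forall>z\<in>Ou. \<not> (adj ends F1)\<^sup>*\<^sup>* u z"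
  proof (rule ccontr)
    assume "\<not> thesis"
    hence all: "\<forall>u\<in>W - {w}. \<exists>z\<in>Ou. (adj ends F1)\<^sup>*\<^sup>* u z" using that by blast
    have "connected_sg ends (W - {w}) F1" unfolding connected_sg_def
    proof (intro ballI)
      fix x y assume xy: "x \<in> W - {w}" "y \<in> W - {w}"
      obtain o1 where o1: "o1 \<in> Ou" "(adj ends F1)\<^sup>*\<^sup>* x o1" using all xy by blast
      obtain o2 where o2: "o2 \<in> Ou" "(adj ends F1)\<^sup>*\<^sup>* y o2" using all xy by blast
      have "(adj ends F1)\<^sup>*\<^sup>* o1 o2" using Oc o1 o2 by blast
      thus "(adj ends F1)\<^sup>*\<^sup>* x y" using o1 o2 reach_sym by (metis rtranclp_trans)
    qed
    thus False using nc unfolding F1_def by blast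
  qed
  define C where "C = {y. (adj ends F1)\<^sup>*\<^sup>* u y}"
  have Cgen: "y \<noteq> w \<and> y \<in> W" if "(adj ends F1)\<^sup>*\<^sup>* u y" for y
    using that
  proof (induction rule: rtranclp_induct)
    case base then show ?case using u by blast
  next
    case (step y z)
    then obtain e where "e \<in> F1" "ends e = {y,z}" unfolding adj_def by blast
    then show ?case using sub unfolding F1_def is_subgraph_def by blast
  qed
  have CW: "y \<in> W" "y \<noteq> w" if "y \<in> C" for y using Cgen that unfolding C_def by auto
  have CS: "y \<in> S" if "y \<in> C" for y
    using u(2) CW[OF that] that unfolding C_def Ou_def by blast
  have clos: "z \<in> C" if "y \<in> C" "e \<in> F" "ends e = {y,z}" "z \<noteq> w" for y z e
  proof -
    have "e \<in> F1" unfolding F1_def using that CW[OF that(1)] by auto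
    hence "adj ends F1 y z" unfolding adj_def using that by blast
    thus ?thesis using that(1) unfolding C_def by (simp add: rtranclp.rtrancl_into_rtrancl)
  qed
  have uC: "u \<in> C" unfolding C_def by simp
  define W' where "W' = W - C"
  define F' where "F' = {e\<in>F. ends e \<inter> C = {}}"
  have s1: "is_subgraph ends W' F'" using sub unfolding W'_def F'_def is_subgraph_def by blast
  have s2: "delta ends S \<subseteq> F'"
  proof
    fix e assume e: "e \<in> delta ends S"
    have eF: "e \<in> F" using P e unfolding PP_def by blast
    obtain p q where pq: "ends e = {p,q}" "p \<in> S" "q \<notin> S" using obtain_cross[OF sg e] by blast
    have "q \<notin> C" using CS pq by blast
    moreover have "p \<notin> C"
    proof
      assume "p \<in> C"
      hence "q \<in> C" using clos[OF _ eF pq(1)] pq w by blast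
      thus False using CS pq by blast
    qed
    ultimately show "e \<in> F'" unfolding F'_def using eF pq by auto
  qed
  have sc: "(y \<notin> C \<longrightarrow> (adj ends (F' - delta ends S))\<^sup>*\<^sup>* x y) \<and>
            (y \<in> C \<longrightarrow> (adj ends (F' - delta ends S))\<^sup>*\<^sup>* x w)"
    if "(adj ends (F - delta ends S))\<^sup>*\<^sup>* x y" "x \<notin> C" for x y
    using that(1)
  proof (induction rule: rtranclp_induct)
    case base then show ?case using that(2) by simp
  next
    case (step y z)
    then obtain e where e: "e \<in> F" "e \<notin> delta ends S" "ends e = {y,z}" unfolding adj_def by blast
    have e': "ends e = {z,y}" using e(3) by (simp add: insert_commute)
    show ?case
    proof (cases "y \<in> C")
      case yC: True
      show ?thesis
      proof (cases "z \<in> C")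
        case True then show ?thesis using step.IH yC by blast
      next
        case False
        hence "z = w" using clos[OF yC e(1) e(3)] by blast
        then show ?thesis using step.IH yC False by blast
      qed
    next
      case yC: False
      show ?thesis
      proof (cases "z \<in> C")
        case True
        hence "y = w" using clos[OF True e(1) e'] yC by blast
        then show ?thesis using step.IH yC True by blast
      next
        case False
        hence "e \<in> F' - delta ends S" unfolding F'_def using e yC by auto
        hence "adj ends (F' - delta ends S) y z" unfolding adj_def using e(3) by blast
        then show ?thesis using step.IH yC False by (meson rtranclp.rtrancl_into_rtrancl)
      qed
    qed
  qed
  have s3: "connected_sg ends (W' \<inter> S) (F' - delta ends S)" unfolding connected_sg_def
  proof (intro ballI)
    fix x y assume xy: "x \<in> W' \<inter> S" "y \<in> W' \<inter> S"
    hence "(adj ends (F - delta ends S))\<^sup>*\<^sup>* x y" using P unfolding PP_def connected_sg_def W'_def by blast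
    thus "(adj ends (F' - delta ends S))\<^sup>*\<^sup>* x y" using sc xy unfolding W'_def by blast
  qed
  have s4: "connected_sg ends (W' - S) (F' - delta ends S)" unfolding connected_sg_def
  proof (intro ballI)
    fix x y assume xy: "x \<in> W' - S" "y \<in> W' - S"
    have "{e\<in>F - delta ends S. ends e \<subseteq> - S} \<subseteq> F' - delta ends S"
      unfolding F'_def using CS by blast
    thus "(adj ends (F' - delta ends S))\<^sup>*\<^sup>* x y" using outer[of x y] xy unfolding W'_def
      by (meson Diff_iff reach_mono)
  qed
  have "PP ends S W' F'" unfolding PP_def using s1 s2 s3 s4 by blast
  moreover have "W' \<subset> W" unfolding W'_def using uC u by blast
  moreover have "F' \<subseteq> F" unfolding F'_def by blast
  ultimately show ?thesis by blast
qed

lemma PP_min_biconn: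
  fixes ends :: "'e::finite \<Rightarrow> 'v::finite set"
  assumes sg: "simple_graph ends" and P: "PP ends S W F" and dS: "delta ends S \<noteq> {}"
    and min: "\<forall>W' F'. PP ends S W' F' \<longrightarrow> card W + card F \<le> card W' + card F'"
  shows "biconn ends W F"
  unfolding biconn_def
proof (intro conjI ballI)
  show "connected_sg ends W F" by (rule PP_conn[OF sg P dS])
next
  fix w assume w: "w \<in> W"
  show "connected_sg ends (W - {w}) {e \<in> F. w \<notin> ends e}"
  proof (rule ccontr)
    assume nc: "\<not> ?thesis"
    have "\<exists>W' F'. PP ends S W' F' \<and> W' \<subset> W \<and> F' \<subseteq> F"
    proof (cases "w \<in> S")
      case True then show ?thesis using remove_side[OF sg P dS w True nc] by blast
    next
      case False
      have P': "PP ends (- S) W F" using P PP_compl[OF sg] by blast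
      have dS': "delta ends (- S) \<noteq> {}" using dS delta_compl[OF sg] by simp
      show ?thesis using remove_side[OF sg P' dS' w _ nc] False PP_compl[OF sg] by blast
    qed
    then obtain W' F' where W': "PP ends S W' F'" "W' \<subset> W" "F' \<subseteq> F" by blast
    have "card W' < card W" using W'(2) by (simp add: psubset_card_mono)
    moreover have "card F' \<le> card F" using W'(3) by (simp add: card_mono)
    ultimately show False using min W'(1) by fastforce
  qed
qed



lemma decomp:
  fixes ends :: "'e::finite \<Rightarrow> 'v::finite set"
  assumes sg: "simple_graph ends" and at: "almost_tree 2 ends"
    and d4: "card (delta ends S) \<ge> 4"
  shows "\<exists>A. delta ends A \<noteq> {} \<and> delta ends A \<subseteq> delta ends S \<and> delta ends A \<noteq> delta ends S"
proof (rule ccontr)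
  assume "\<not> ?thesis"
  hence ND: "\<forall>A. delta ends A \<subseteq> delta ends S \<longrightarrow> delta ends A = {} \<or> delta ends A = delta ends S"
    by blast
  have conn: "connected_sg ends UNIV UNIV" using at unfolding almost_tree_def by blast
  have dS: "delta ends S \<noteq> {}" using d4 by auto
  have c1: "connected_sg ends S (- delta ends S)" by (rule side_conn[OF sg conn dS ND])
  have c2: "connected_sg ends (- S) (- delta ends S)"
    using side_conn[OF sg conn, of "- S"] ND dS unfolding delta_compl[OF sg] by blast
  have PU: "PP ends S UNIV UNIV"
    unfolding PP_def is_subgraph_def using c1 c2 by (simp add: Compl_eq_Diff_UNIV[symmetric])
  obtain WF0 where WF0: "(\<lambda>(W,F). PP ends S W F) WF0"
    "\<forall>y. (\<lambda>(W,F). PP ends S W F) y \<longrightarrow> (\<lambda>(W,F). card W + card F) WF0 \<le> (\<lambda>(W,F). card W + card F) y"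
    using ex_has_least_nat[of "\<lambda>(W,F). PP ends S W F" "(UNIV, UNIV)" "\<lambda>(W,F). card W + card F"] PU
    by auto
  obtain W0 F0 where WF0e: "WF0 = (W0, F0)" by (cases WF0)
  have P0: "PP ends S W0 F0" using WF0(1) WF0e by simp
  have min0: "\<forall>W' F'. PP ends S W' F' \<longrightarrow> card W0 + card F0 \<le> card W' + card F'"
    using WF0(2) WF0e by force
  have bc0: "biconn ends W0 F0" by (rule PP_min_biconn[OF sg P0 dS min0])
  have cnt0: "card W0 + card (delta ends S) \<le> card F0 + 2" by (rule PP_count[OF sg P0 dS])
  have sub0: "is_subgraph ends W0 F0" using P0 unfolding PP_def by blast
  obtain e0 where e0: "e0 \<in> delta ends S" using dS by blast
  obtain a b where ab: "ends e0 = {a,b}" "a \<in> S" "b \<notin> S" using obtain_cross[OF sg e0] by blast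
  have "a \<in> W0" using P0 e0 ab unfolding PP_def is_subgraph_def by blast
  hence W0ne: "W0 \<noteq> {}" by blast
  define Q where "Q = (\<lambda>(W,F). is_subgraph ends W F \<and> biconn ends W F \<and> W0 \<subseteq> W \<and> F0 \<subseteq> F)"
  define m where "m = (\<lambda>(W::'v set,F::'e set). card (UNIV::'v set) + card (UNIV::'e set) - (card W + card F))"
  have Q0: "Q (W0, F0)" unfolding Q_def using sub0 bc0 by simp
  obtain WF where WF: "Q WF" "\<forall>y. Q y \<longrightarrow> m WF \<le> m y"
    using ex_has_least_nat[of Q "(W0,F0)" m] Q0 by blast
  obtain W F where WFe: "WF = (W, F)" by (cases WF)
  have QWF: "is_subgraph ends W F" "biconn ends W F" "W0 \<subseteq> W" "F0 \<subseteq> F"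
    using WF(1) WFe unfolding Q_def by auto
  have bcc: "biconnected_component ends W F"
  proof -
    have "W' = W \<and> F' = F" if a: "is_subgraph ends W' F' \<and> biconn ends W' F' \<and> W \<subseteq> W' \<and> F \<subseteq> F'"
    for W' F'
  proof -
    have "Q (W', F')" unfolding Q_def using a using QWF by auto
    hence "m (W,F) \<le> m (W',F')" using WF(2) WFe by blast
    moreover have "card W' \<le> card (UNIV::'v set)" "card F' \<le> card (UNIV::'e set)"
      by (simp_all add: card_mono)
    moreover have "card W \<le> card W'" "card F \<le> card F'" using a by (simp_all add: card_mono)
    ultimately have "card W' = card W" "card F' = card F" unfolding m_def by auto
    thus ?thesis using a by (metis card_subset_eq finite)
  qed
  thus ?thesis unfolding biconnected_component_def using QWF by blast
  qed
  obtain T where T: "spanning_tree ends W F T" "card (F - T) \<le> 2"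
    using at bcc unfolding almost_tree_def by blast
  have Wne: "W \<noteq> {}" using W0ne QWF by blast
  have connW: "connected_sg ends W F" using QWF(2) unfolding biconn_def by blast
  have k1: "card F0 + card W \<le> card F + card W0"
    by (rule cyc_mono[OF QWF(1) connW sub0 QWF(3,4) W0ne])
  have k2: "card T + 1 \<le> card W" by (rule tree_card[OF QWF(1) T(1) Wne])
  have TF: "T \<subseteq> F" using T(1) unfolding spanning_tree_def by blast
  have "card (F - T) = card F - card T" using TF by (simp add: card_Diff_subset)
  thus False using k1 k2 cnt0 d4 T(2) by linarith
qed

theorem lemma2:
  fixes ends :: "'e::finite \<Rightarrow> 'v::finite set" and X Y :: "'v set"
  assumes "simple_graph ends"
    and "almost_tree 2 ends"
    and "cutvec ends X \<noteq> cutvec ends Y"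
    and "cutvec ends X extreme_point_of CUT ends"
    and "cutvec ends Y extreme_point_of CUT ends"
    and "adjacent_in (CUT ends) (cutvec ends X) (cutvec ends Y)"
  shows "card (delta ends ((X - Y) \<union> (Y - X))) \<le> 3"
proof (rule ccontr)
  assume "\<not> ?thesis"
  hence "card (delta ends ((X - Y) \<union> (Y - X))) \<ge> 4" by simp
  then obtain A where A: "delta ends A \<noteq> {}" "delta ends A \<subseteq> delta ends ((X - Y) \<union> (Y - X))"
    "delta ends A \<noteq> delta ends ((X - Y) \<union> (Y - X))"
    using decomp[OF assms(1,2)] by blast
  show False by (rule poly[OF assms(1,3,6) A])
qed

end
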